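(* Let $\mathcal T$ be an admissible labeled tree. Then $\Delta(\mathcal T)=0$ if and only if the root's label appears on no other vertex, and every other label appears on exactly two vertices $v,v'$, which lie at the same distance from the root and whose parents carry the same label. In that case the edges $(p(v),v)$ and $(p(v'),v')$ are paired row by row, giving a perfect pairing of the edges between each pair of consecutive levels.
   Context: Setting: $T$ is a finite rooted tree with levels (root at level $t$, children of a level-$s$ vertex at level $s-1$); $p(v)$ denotes the parent of $v$. A labeling gives each vertex $v$ a label $\ell(v)\in[N]$. The labeled tree $\mathcal T$ is admissible if (i) whenever $u$ is the parent of $v$ and $v$ the parent of $w$, $\ell(u)\ne\ell(w)$; (ii) for every edge $\{u,v\}$ there is another edge $\{u',v'\}$ with $\{\ell(u'),\ell(v')\}=\{\ell(u),\ell(v)\}$. $|V(\mathcal T)|$ is the number of distinct labels used (including the root's), $|E(\mathcal T)|$ the number of edges, and $\Delta(\mathcal T)=\tfrac12|E(\mathcal T)|-|V(\mathcal T)|+1$. *)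

theory Defs
  imports Complex_Main
begin

text \<open>A finite rooted tree: vertex set V, root r, parent map p (only meaningful off the root). The edges are the pairs
  (p v, v) for v in V - {r}; an edge is identified with its child endpoint.\<close>

definition rooted_tree :: "'v set \<Rightarrow> 'v \<Rightarrow> ('v \<Rightarrow> 'v) \<Rightarrow> bool" where
  "rooted_tree V r p \<longleftrightarrow> finite V \<and> r \<in> V \<and> (\<forall>v\<in>V - {r}. p v \<in> V)
     \<and> (\<forall>v\<in>V. \<exists>n. (p ^^ n) v = r)"

definition depth :: "('v \<Rightarrow> 'v) \<Rightarrow> 'v \<Rightarrow> 'v \<Rightarrow> nat" where
  "depth p r v = (LEAST n. (p ^^ n) v = r)"

definition admissible :: "'v set \<Rightarrow> 'v \<Rightarrow> ('v \<Rightarrow> 'v) \<Rightarrow> ('v \<Rightarrow> nat) \<Rightarrow> bool" where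
  "admissible V r p lab \<longleftrightarrow>
     (\<forall>w\<in>V. w \<noteq> r \<and> p w \<noteq> r \<longrightarrow> lab (p (p w)) \<noteq> lab w)
   \<and> (\<forall>v\<in>V - {r}. \<exists>w\<in>V - {r}. w \<noteq> v \<and> {lab (p w), lab w} = {lab (p v), lab v})"

text \<open>|V(T)|: number of distinct labels; |E(T)|: number of edges.\<close>
definition num_labels :: "'v set \<Rightarrow> ('v \<Rightarrow> nat) \<Rightarrow> nat" where
  "num_labels V lab = card (lab ` V)"

definition num_edges :: "'v set \<Rightarrow> 'v \<Rightarrow> nat" where
  "num_edges V r = card (V - {r})"

definition Delta :: "'v set \<Rightarrow> 'v \<Rightarrow> ('v \<Rightarrow> nat) \<Rightarrow> real" where
  "Delta V r lab = real (num_edges V r) / 2 - real (num_labels V lab) + 1"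

end

theory Submission imports Defs begin

lemma fiber_sum:
  assumes "finite A"
  shows "card A = (\<Sum>c\<in>g`A. card {a\<in>A. g a = c})"
proof -
  have "A = (\<Union>c\<in>g`A. {a\<in>A. g a = c})" by auto
  hence "card A = card (\<Union>c\<in>g`A. {a\<in>A. g a = c})" by simp
  also have "\<dots> = (\<Sum>c\<in>g`A. card {a\<in>A. g a = c})"
    by (rule card_UN_disjoint) (use assms in auto)
  finally show ?thesis .
qed

lemma depth_facts:
  assumes tree: "rooted_tree V r p" and v: "v \<in> V"
  shows "depth p r v = 0 \<longleftrightarrow> v = r"
    and "v \<noteq> r \<Longrightarrow> depth p r v = Suc (depth p r (p v))"
    and "v \<noteq> r \<Longrightarrow> p v \<in> V"
proof -
  obtain n where n: "(p ^^ n) v = r" using tree v unfolding rooted_tree_def by blast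
  have L: "(p ^^ depth p r v) v = r" unfolding depth_def by (rule LeastI[of _ n]) (rule n)
  show "depth p r v = 0 \<longleftrightarrow> v = r"
  proof
    assume "depth p r v = 0" thus "v = r" using L by simp
  next
    assume "v = r" thus "depth p r v = 0" unfolding depth_def by (intro Least_eq_0) simp
  qed
  show "v \<noteq> r \<Longrightarrow> p v \<in> V" using tree v unfolding rooted_tree_def by blast
  assume vr: "v \<noteq> r"
  have d0: "depth p r v \<noteq> 0" using L vr by (metis funpow_0)
  then obtain k where k: "depth p r v = Suc k" by (cases "depth p r v") auto
  have pk: "(p ^^ k) (p v) = r" using L k by (simp add: funpow_Suc_right del: funpow.simps)
  have le1: "depth p r (p v) \<le> k" unfolding depth_def by (rule Least_le) (rule pk)
  have Lp: "(p ^^ depth p r (p v)) (p v) = r" unfolding depth_def by (rule LeastI[of _ k]) (rule pk)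
  have "(p ^^ Suc (depth p r (p v))) v = r" using Lp by (simp add: funpow_Suc_right del: funpow.simps)
  hence "depth p r v \<le> Suc (depth p r (p v))" unfolding depth_def by (rule Least_le)
  thus "depth p r v = Suc (depth p r (p v))" using le1 k by simp
qed
theorem lemma2p14:
  fixes V :: "'v set" and r :: 'v and p :: "'v \<Rightarrow> 'v" and lab :: "'v \<Rightarrow> nat" and N :: nat
  assumes tree: "rooted_tree V r p"
    and labels: "lab ` V \<subseteq> {1..N}"
    and adm: "admissible V r p lab"
  shows "(Delta V r lab = 0 \<longleftrightarrow>
            (\<forall>v\<in>V - {r}. lab v \<noteq> lab r) \<and>
            (\<forall>x\<in>lab ` V - {lab r}. \<exists>v v'. v \<noteq> v' \<and> {w\<in>V. lab w = x} = {v, v'}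
                 \<and> depth p r v = depth p r v' \<and> lab (p v) = lab (p v')))
       \<and> (Delta V r lab = 0 \<longrightarrow>
            (\<exists>\<sigma>. \<forall>v\<in>V - {r}. \<sigma> v \<in> V - {r} \<and> \<sigma> v \<noteq> v \<and> \<sigma> (\<sigma> v) = v
                 \<and> depth p r (\<sigma> v) = depth p r v
                 \<and> lab (\<sigma> v) = lab v \<and> lab (p (\<sigma> v)) = lab (p v)))"
proof -
  define d where "d = depth p r"
  define X where "X = lab ` V - {lab r}"
  define m where "m x = (LEAST n. \<exists>v\<in>V. lab v = x \<and> d v = n)" for x
  define u where "u x = (SOME v. v\<in>V \<and> lab v = x \<and> d v = m x)" for x
  define \<pi> where "\<pi> x = lab (p (u x))" for x
  define pr where "pr v = {lab (p v), lab v}" for v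
  define E where "E = V - {r}"
  define C where "C = pr ` E"
  define f where "f x = {\<pi> x, x}" for x
  have finV: "finite V" and rV: "r \<in> V" using tree unfolding rooted_tree_def by auto
  have finE: "finite E" using finV unfolding E_def by simp
  have finX: "finite X" using finV unfolding X_def by simp
  have d0: "\<And>v. v \<in> V \<Longrightarrow> d v = 0 \<longleftrightarrow> v = r"
    unfolding d_def by (rule depth_facts(1)[OF tree])
  have dS: "\<And>v. v \<in> V \<Longrightarrow> v \<noteq> r \<Longrightarrow> d v = Suc (d (p v))"
    unfolding d_def by (rule depth_facts(2)[OF tree])
  have pV: "\<And>v. v \<in> V \<Longrightarrow> v \<noteq> r \<Longrightarrow> p v \<in> V"
    by (rule depth_facts(3)[OF tree])
  have mle: "\<And>v. v \<in> V \<Longrightarrow> m (lab v) \<le> d v"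
    unfolding m_def by (rule Least_le) blast
  have u: "u x \<in> V \<and> lab (u x) = x \<and> d (u x) = m x" if x: "x \<in> X" for x
  proof -
    obtain v where v: "v \<in> V" "lab v = x" using x unfolding X_def by blast
    have "\<exists>v\<in>V. lab v = x \<and> d v = m x"
      unfolding m_def by (rule LeastI[of _ "d v"]) (use v in blast)
    then obtain w where "w\<in>V \<and> lab w = x \<and> d w = m x" by blast
    then show ?thesis unfolding u_def by (rule someI)
  qed
  have ur: "u x \<noteq> r" if "x \<in> X" for x using u[OF that] that unfolding X_def by auto
  have dpu: "d (p (u x)) + 1 = m x \<and> p (u x) \<in> V" if x: "x \<in> X" for x
    using u[OF x] ur[OF x] dS pV by fastforce
  have mpi: "m (\<pi> x) < m x" if x: "x \<in> X" for x
    using mle[of "p (u x)"] dpu[OF x] unfolding \<pi>_def by simp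
  have inj: "inj_on f X"
  proof (rule inj_onI)
    fix x y assume xy: "x \<in> X" "y \<in> X" "f x = f y"
    show "x = y"
    proof (rule ccontr)
      assume "x \<noteq> y"
      hence "x = \<pi> y" "y = \<pi> x" using xy(3) unfolding f_def by (auto simp: doubleton_eq_iff)
      thus False using mpi[OF xy(1)] mpi[OF xy(2)] by simp
    qed
  qed
  have fX: "f ` X \<subseteq> C"
  proof
    fix c assume "c \<in> f ` X"
    then obtain x where x: "x \<in> X" "c = f x" by blast
    have "pr (u x) = f x" unfolding pr_def f_def \<pi>_def using u[OF x(1)] by auto
    moreover have "u x \<in> E" unfolding E_def using u[OF x(1)] ur[OF x(1)] by auto
    ultimately show "c \<in> C" unfolding C_def using x by auto
  qed
  have finC: "finite C" unfolding C_def using finE by simp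
  have cardL: "card (lab ` V) = card X + 1"
  proof -
    have "lab ` V = insert (lab r) X" unfolding X_def using rV by auto
    moreover have "lab r \<notin> X" unfolding X_def by simp
    ultimately show ?thesis using finX by simp
  qed
  have fib2: "2 \<le> card {v\<in>E. pr v = c}" if c: "c \<in> C" for c
  proof -
    obtain v where v: "v \<in> E" "c = pr v" using c unfolding C_def by blast
    have adm2: "\<forall>v\<in>V - {r}. \<exists>w\<in>V - {r}. w \<noteq> v \<and> {lab (p w), lab w} = {lab (p v), lab v}"
      using adm unfolding admissible_def by (rule conjunct2)
    have "v \<in> V - {r}" using v(1) unfolding E_def .
    from bspec[OF adm2 this] obtain w where w: "w \<in> V - {r}" "w \<noteq> v" "{lab (p w), lab w} = {lab (p v), lab v}"
      by blast
    have "{v, w} \<subseteq> {v\<in>E. pr v = c}" using v w unfolding pr_def E_def by auto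
    hence "card {v, w} \<le> card {v\<in>E. pr v = c}" by (rule card_mono[rotated]) (use finE in simp)
    thus ?thesis using w(2) by simp
  qed
  have Esum: "card E = (\<Sum>c\<in>C. card {v\<in>E. pr v = c})"
    unfolding C_def by (rule fiber_sum[OF finE])
  have ge: "2 * card C \<le> card E"
  proof -
    have "(\<Sum>c\<in>C. 2) \<le> (\<Sum>c\<in>C. card {v\<in>E. pr v = c})" by (rule sum_mono) (rule fib2)
    thus ?thesis using Esum by simp
  qed
  have cX: "card X \<le> card C"
    using card_mono[OF finC fX] card_image[OF inj] by simp
  have Deq: "Delta V r lab = 0 \<longleftrightarrow> card E = 2 * card X"
  proof -
    have "Delta V r lab = real (card E) / 2 - real (card X)"
      unfolding Delta_def num_edges_def num_labels_def E_def[symmetric] cardL by simp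
    thus ?thesis by linarith
  qed
  define CH where "CH = ((\<forall>v\<in>V - {r}. lab v \<noteq> lab r) \<and>
            (\<forall>x\<in>lab ` V - {lab r}. \<exists>v v'. v \<noteq> v' \<and> {w\<in>V. lab w = x} = {v, v'}
                 \<and> depth p r v = depth p r v' \<and> lab (p v) = lab (p v')))"
  have fwd: CH if eq: "card E = 2 * card X"
  proof -
    have cC: "card C = card X" using eq ge cX by simp
    have fXC: "f ` X = C"
      by (rule card_subset_eq[OF finC fX]) (simp add: card_image[OF inj] cC)
    have claim: "\<forall>v\<in>V. v \<noteq> r \<longrightarrow> d v = n \<longrightarrow>
        (lab v \<noteq> lab r \<and> m (lab v) = n \<and> lab (p v) = \<pi> (lab v))" for n
    proof (induction n rule: less_induct)
      case (less n)
      show ?case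
      proof (intro ballI impI)
        fix v assume v: "v \<in> V" "v \<noteq> r" "d v = n"
        have wV: "p v \<in> V" using pV v by blast
        have dw: "n = Suc (d (p v))" using dS v by simp
        have "pr v \<in> C" unfolding C_def E_def using v by blast
        then obtain x where x: "x \<in> X" "pr v = f x" using fXC by blast
        hence "(lab v = x \<and> lab (p v) = \<pi> x) \<or> (lab v = \<pi> x \<and> lab (p v) = x)"
          unfolding pr_def f_def by (auto simp: doubleton_eq_iff)
        thus "lab v \<noteq> lab r \<and> m (lab v) = n \<and> lab (p v) = \<pi> (lab v)"
        proof
          assume A: "lab v = x \<and> lab (p v) = \<pi> x"
          have "m x \<le> n" using mle[OF v(1)] A v(3) by simp
          moreover have "\<not> m x < n"
          proof
            assume lt: "m x < n"
            show False
            proof (cases "p v = r")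
              case True
              hence "n = 1" using dw d0[OF wV] by simp
              hence "d (u x) = 0" using lt u[OF x(1)] by simp
              thus False using d0 u[OF x(1)] ur[OF x(1)] by blast
            next
              case False
              have IH: "lab (p v) \<noteq> lab r \<and> m (lab (p v)) = d (p v)"
                using less[of "d (p v)"] dw wV False by blast
              have "m (\<pi> x) \<le> d (p (u x))" using mle[of "p (u x)"] dpu[OF x(1)] unfolding \<pi>_def by simp
              thus False using IH A dpu[OF x(1)] lt dw by simp
            qed
          qed
          ultimately show ?thesis using A x(1) unfolding X_def by auto
        next
          assume B: "lab v = \<pi> x \<and> lab (p v) = x"
          have wr: "p v \<noteq> r" using B x(1) unfolding X_def by auto
          have IH: "lab (p (p v)) = \<pi> (lab (p v))"
            using less[of "d (p v)"] dw wV wr by blast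
          have "lab (p (p v)) \<noteq> lab v" using adm v wr unfolding admissible_def by blast
          thus ?thesis using IH B by simp
        qed
      qed
    qed
    have cl: "lab v \<noteq> lab r \<and> m (lab v) = d v \<and> lab (p v) = \<pi> (lab v)" if "v \<in> V" "v \<noteq> r" for v
      using claim[of "d v"] that by blast
    have S: "{w\<in>V. lab w = x} = {v\<in>E. pr v = f x}" if x: "x \<in> X" for x
    proof
      show "{w\<in>V. lab w = x} \<subseteq> {v\<in>E. pr v = f x}"
        using cl x unfolding X_def E_def pr_def f_def by fastforce
    next
      show "{v\<in>E. pr v = f x} \<subseteq> {w\<in>V. lab w = x}"
      proof
        fix v assume v: "v \<in> {v\<in>E. pr v = f x}"
        hence vV: "v \<in> V" "v \<noteq> r" unfolding E_def by auto
        have "(lab v = x \<and> lab (p v) = \<pi> x) \<or> (lab v = \<pi> x \<and> lab (p v) = x)"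
          using v unfolding pr_def f_def by (auto simp: doubleton_eq_iff)
        moreover have "\<not> (lab v = \<pi> x \<and> lab (p v) = x)"
        proof
          assume B: "lab v = \<pi> x \<and> lab (p v) = x"
          have "\<pi> x \<in> X" using cl[OF vV] vV(1) B unfolding X_def by (metis DiffI imageI singletonD)
          moreover have "\<pi> (\<pi> x) = x" using cl[OF vV] B by simp
          ultimately show False using mpi[OF x] mpi[of "\<pi> x"] by simp
        qed
        ultimately show "v \<in> {w\<in>V. lab w = x}" using vV by auto
      qed
    qed
    have c2: "card {w\<in>V. lab w = x} = 2" if x: "x \<in> X" for x
    proof -
      have "f x \<in> C" using fX x by blast
      hence "card {v\<in>E. pr v = f x} = 2"
      proof -
        have le: "\<forall>c\<in>C. 2 \<le> card {v\<in>E. pr v = c}" using fib2 by blast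
        show ?thesis
        proof (rule ccontr)
          assume ne: "card {v\<in>E. pr v = f x} \<noteq> 2"
          have "(\<Sum>c\<in>C. 2) < (\<Sum>c\<in>C. card {v\<in>E. pr v = c})"
            by (rule sum_strict_mono_ex1[OF finC]) (use le ne \<open>f x \<in> C\<close> in force)+
          thus False using Esum eq cC by simp
        qed
      qed
      thus ?thesis using S[OF x] by simp
    qed
    show CH unfolding CH_def
    proof (intro conjI ballI)
      fix v assume "v \<in> V - {r}" thus "lab v \<noteq> lab r" using cl by blast
    next
      fix x assume x: "x \<in> lab ` V - {lab r}"
      hence xX: "x \<in> X" unfolding X_def .
      obtain a b where ab: "{w\<in>V. lab w = x} = {a, b}" "a \<noteq> b" using c2[OF xX] card_2_iff by metis
      have a: "a \<in> V" "lab a = x" and b: "b \<in> V" "lab b = x" using ab(1) by blast+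
      have ar: "a \<noteq> r" and br: "b \<noteq> r" using a b xX unfolding X_def by auto
      show "\<exists>v v'. v \<noteq> v' \<and> {w\<in>V. lab w = x} = {v, v'}
                 \<and> depth p r v = depth p r v' \<and> lab (p v) = lab (p v')"
      proof (intro exI conjI)
        show "a \<noteq> b" "{w\<in>V. lab w = x} = {a, b}" by (rule ab(2), rule ab(1))
        show "depth p r a = depth p r b" using cl[OF a(1) ar] cl[OF b(1) br] a b unfolding d_def by simp
        show "lab (p a) = lab (p b)" using cl[OF a(1) ar] cl[OF b(1) br] a b by simp
      qed
    qed
  qed
  have bwd: "card E = 2 * card X" if CH
  proof -
    have A: "\<forall>v\<in>E. lab v \<noteq> lab r" using that unfolding CH_def E_def by blast
    have lE: "lab ` E = X" unfolding X_def E_def using A E_def by auto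
    have fib: "card {v\<in>E. lab v = x} = 2" if x: "x \<in> X" for x
    proof -
      have "{v\<in>E. lab v = x} = {w\<in>V. lab w = x}" using x unfolding E_def X_def by auto
      moreover obtain a b where "a \<noteq> b" "{w\<in>V. lab w = x} = {a, b}"
        using \<open>CH\<close> x unfolding CH_def X_def by blast
      ultimately show ?thesis by simp
    qed
    have "card E = (\<Sum>x\<in>lab ` E. card {v\<in>E. lab v = x})" by (rule fiber_sum[OF finE])
    also have "\<dots> = (\<Sum>x\<in>X. 2)" using lE fib by simp
    finally show ?thesis by simp
  qed
  have sig: "\<exists>\<sigma>. \<forall>v\<in>V - {r}. \<sigma> v \<in> V - {r} \<and> \<sigma> v \<noteq> v \<and> \<sigma> (\<sigma> v) = v
                 \<and> depth p r (\<sigma> v) = depth p r v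
                 \<and> lab (\<sigma> v) = lab v \<and> lab (p (\<sigma> v)) = lab (p v)" if CH
  proof -
    define \<sigma> where "\<sigma> v = (SOME w. w \<in> V \<and> lab w = lab v \<and> w \<noteq> v)" for v
    have P: "\<exists>a b. a \<noteq> b \<and> {w\<in>V. lab w = lab v} = {a, b} \<and> depth p r a = depth p r b
               \<and> lab (p a) = lab (p b)" if v: "v \<in> V - {r}" for v
      using \<open>CH\<close> v unfolding CH_def by blast
    have sv: "\<sigma> v \<in> V \<and> lab (\<sigma> v) = lab v \<and> \<sigma> v \<noteq> v" if v: "v \<in> V - {r}" for v
    proof -
      obtain a b where ab: "a \<noteq> b" "{w\<in>V. lab w = lab v} = {a, b}" using P[OF v] by blast
      have "\<exists>w. w \<in> V \<and> lab w = lab v \<and> w \<noteq> v"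
      proof -
        have "v \<in> {a, b}" using ab(2) v by blast
        moreover have "a \<in> V \<and> lab a = lab v" "b \<in> V \<and> lab b = lab v" using ab(2) by blast+
        ultimately show ?thesis using ab(1) by blast
      qed
      thus ?thesis unfolding \<sigma>_def by (rule someI_ex)
    qed
    show ?thesis
    proof (rule exI[of _ \<sigma>], intro ballI)
      fix v assume v: "v \<in> V - {r}"
      obtain a b where ab: "a \<noteq> b" "{w\<in>V. lab w = lab v} = {a, b}" "depth p r a = depth p r b"
               "lab (p a) = lab (p b)" using P[OF v] by blast
      have lr: "lab v \<noteq> lab r" using \<open>CH\<close> v unfolding CH_def by blast
      have s1: "\<sigma> v \<in> V - {r}" using sv[OF v] lr by auto
      have s2: "\<sigma> (\<sigma> v) \<in> V \<and> lab (\<sigma> (\<sigma> v)) = lab v \<and> \<sigma> (\<sigma> v) \<noteq> \<sigma> v" using sv[OF s1] sv[OF v] by simp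
      have m1: "v \<in> {a, b}" "\<sigma> v \<in> {a, b}" "\<sigma> (\<sigma> v) \<in> {a, b}"
        using ab(2) v sv[OF v] s2 by blast+
      have "\<sigma> (\<sigma> v) = v" using m1 ab(1) s2 sv[OF v] by auto
      moreover have "depth p r (\<sigma> v) = depth p r v \<and> lab (p (\<sigma> v)) = lab (p v)"
        using m1 ab by auto
      ultimately show "\<sigma> v \<in> V - {r} \<and> \<sigma> v \<noteq> v \<and> \<sigma> (\<sigma> v) = v
                 \<and> depth p r (\<sigma> v) = depth p r v
                 \<and> lab (\<sigma> v) = lab v \<and> lab (p (\<sigma> v)) = lab (p v)"
        using s1 sv[OF v] by blast
    qed
  qed
  have main: "Delta V r lab = 0 \<longleftrightarrow> CH" using Deq fwd bwd by blast
  show ?thesis using main sig unfolding CH_def by blast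
qed

end
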